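(* Let $G$ be a group and $R,L,S\subseteq G$ with $R=R^{-1}$, $L=L^{-1}$, $|R|=|L|$, and such that no element of $R\cup L$ is equal to its own inverse. If the bi-Cayley graph $\mathrm{Bi}(G,R,L,S)$ is connected, then it admits a partite presentation with exactly two vertex classes, i.e. $\mathrm{Bi}(G,R,L,S)\cong\mathrm{PCay}(P)$ for a partite presentation $P$ with $|X|=2$.
   Context: $\mathrm{Bi}(G,R,L,S)$ has vertex set $\{(g)_0,(g)_1: g\in G\}$ and edges $\{(g)_0,(gr)_0\}$ ($g\in G,r\in R$), $\{(g)_1,(gl)_1\}$ ($g\in G,l\in L$), and $\{(g)_0,(gs)_1\}$ ($g\in G, s\in S$). A partite presentation $P=\langle X\mid U\mid I\mid \phi\mid \mathcal R\rangle$ consists of: a nonempty set $X$; disjoint sets $U$, $I$ with $S':=U\cup I$; the group $MF_P:=\langle S'\mid s^2\ (s\in I)\rangle$; a map $\phi:S'\to\mathrm{Sym}(X)$ such that $\phi(s)$ is a fixed-point-free involution for each $s\in I$ and the $\phi(s)$ generate a subgroup acting transitively on $X$; and for each $x\in X$ a set $\mathcal R_x\subseteq MF_P$ of words $s_1\cdots s_n$ ($s_i\in S'\cup S'^{-1}$, $\phi(s^{-1}):=\phi(s)^{-1}$) with $\phi(s_n)\circ\cdots\circ\phi(s_1)(x)=x$. The presentation graph $C(P)$ has vertex set $X$; for each $s\in U$ and $x\in X$ one edge from $x$ to $\phi(s)(x)$, its orientation from $x$ to $\phi(s)(x)$ labelled $s$ and reverse labelled $s^{-1}$; for each $s\in I$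 and each pair $\{x,\phi(s)(x)\}$ one edge with both orientations labelled $s$. The presentation complex $\mathcal C(P)$ is $C(P)$ with, for every $x\in X$ and $r=s_1\cdots s_n\in\mathcal R_x$, a 2-cell attached along the closed walk from $x$ successively traversing the outgoing edges labelled $s_1,\dots,s_n$. $\mathrm{PCay}(P)$ is the 1-skeleton of the universal cover of $\mathcal C(P)$. *)

theory Defs
  imports "HOL-Algebra.Group" "HOL-Library.Equipollence"
begin

text \<open>A multigraph is given by a vertex set V, an edge set E and an incidence
map en assigning to each edge its set of (one or two) end vertices.\<close>

definition mg_iso ::
  "'v set \<Rightarrow> 'e set \<Rightarrow> ('e \<Rightarrow> 'v set) \<Rightarrow> 'w set \<Rightarrow> 'f set \<Rightarrow> ('f \<Rightarrow> 'w set) \<Rightarrow> bool" where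
  "mg_iso V E en V' E' en' \<longleftrightarrow>
     (\<exists>fv fe. bij_betw fv V V' \<and> bij_betw fe E E' \<and> (\<forall>e\<in>E. en' (fe e) = fv ` en e))"

definition mg_connected :: "'v set \<Rightarrow> 'e set \<Rightarrow> ('e \<Rightarrow> 'v set) \<Rightarrow> bool" where
  "mg_connected V E en \<longleftrightarrow>
     (\<forall>u\<in>V. \<forall>v\<in>V. (\<lambda>a b. \<exists>e\<in>E. en e = {a, b})\<^sup>*\<^sup>* u v)"

text \<open>Vertex (g)_0 is (g, False), vertex (g)_1 is (g, True); edges are the
sets of their end vertices.\<close>

definition bi_V :: "('g, 'b) monoid_scheme \<Rightarrow> ('g \<times> bool) set" where
  "bi_V G = carrier G \<times> (UNIV :: bool set)"

definition bi_E :: "('g, 'b) monoid_scheme \<Rightarrow> 'g set \<Rightarrow> 'g set \<Rightarrow> 'g set \<Rightarrow> ('g \<times> bool) set set" where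
  "bi_E G R L S =
     {{(g, False), (g \<otimes>\<^bsub>G\<^esub> r, False)} | g r. g \<in> carrier G \<and> r \<in> R} \<union>
     {{(g, True), (g \<otimes>\<^bsub>G\<^esub> l, True)} | g l. g \<in> carrier G \<and> l \<in> L} \<union>
     {{(g, False), (g \<otimes>\<^bsub>G\<^esub> s, True)} | g s. g \<in> carrier G \<and> s \<in> S}"

text \<open>Letters: (s, True) stands for s, (s, False) for s^{-1}; for s in I only
(s, True) is a letter (s^{-1} = s in MF_P).  Words over letters represent
elements of MF_P = <U \<union> I | s^2 (s \<in> I)>.\<close>

type_synonym 's letter = "'s \<times> bool"

definition letters :: "'s set \<Rightarrow> 's set \<Rightarrow> 's letter set" where
  "letters U I = ((\<lambda>s. (s, True)) ` (U \<union> I)) \<union> ((\<lambda>s. (s, False)) ` U)"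

definition inv_letter :: "'s set \<Rightarrow> 's letter \<Rightarrow> 's letter" where
  "inv_letter I a = (if fst a \<in> I then a else (fst a, \<not> snd a))"

definition act_letter :: "'x set \<Rightarrow> ('s \<Rightarrow> 'x \<Rightarrow> 'x) \<Rightarrow> 's letter \<Rightarrow> 'x \<Rightarrow> 'x" where
  "act_letter X \<phi> a y = (if snd a then \<phi> (fst a) y else inv_into X (\<phi> (fst a)) y)"

text \<open>End vertex of the walk in C(P) starting at x and following the word w
(first letter first): phi(s_n) o ... o phi(s_1) (x).\<close>
definition walk_end :: "'x set \<Rightarrow> ('s \<Rightarrow> 'x \<Rightarrow> 'x) \<Rightarrow> 'x \<Rightarrow> 's letter list \<Rightarrow> 'x" where
  "walk_end X \<phi> x w = fold (act_letter X \<phi>) w x"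

definition partite_presentation ::
  "'x set \<Rightarrow> 's set \<Rightarrow> 's set \<Rightarrow> ('s \<Rightarrow> 'x \<Rightarrow> 'x) \<Rightarrow> ('x \<Rightarrow> 's letter list set) \<Rightarrow> bool" where
  "partite_presentation X U I \<phi> Rel \<longleftrightarrow>
     X \<noteq> {} \<and> U \<inter> I = {} \<and>
     (\<forall>s\<in>U \<union> I. bij_betw (\<phi> s) X X) \<and>
     (\<forall>s\<in>I. \<forall>x\<in>X. \<phi> s (\<phi> s x) = x \<and> \<phi> s x \<noteq> x) \<and>
     (\<forall>x\<in>X. \<forall>y\<in>X. \<exists>w\<in>lists (letters U I). walk_end X \<phi> x w = y) \<and>
     (\<forall>x\<in>X. \<forall>r\<in>Rel x. r \<in> lists (letters U I) \<and> walk_end X \<phi> x r = x)"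

text \<open>Vertices of the universal cover = homotopy classes (rel endpoints) of
walks in the presentation complex starting at a base point x0.  Walks from x0
correspond to words over the letters; homotopy is generated by removing
backtracks and removing the boundary of a 2-cell at its base vertex.\<close>

definition pres_step ::
  "'x set \<Rightarrow> 's set \<Rightarrow> 's set \<Rightarrow> ('s \<Rightarrow> 'x \<Rightarrow> 'x) \<Rightarrow> ('x \<Rightarrow> 's letter list set) \<Rightarrow> 'x
    \<Rightarrow> 's letter list \<Rightarrow> 's letter list \<Rightarrow> bool" where
  "pres_step X U I \<phi> Rel x0 w w' \<longleftrightarrow>
     w \<in> lists (letters U I) \<and> w' \<in> lists (letters U I) \<and>
     ((\<exists>u v a. a \<in> letters U I \<and> w = u @ [a, inv_letter I a] @ v \<and> w' = u @ v) \<or>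
      (\<exists>u v r. r \<in> Rel (walk_end X \<phi> x0 u) \<and> w = u @ r @ v \<and> w' = u @ v))"

definition pres_base :: "'x set \<Rightarrow> 'x" where
  "pres_base X = (SOME x. x \<in> X)"

definition pres_homot ::
  "'x set \<Rightarrow> 's set \<Rightarrow> 's set \<Rightarrow> ('s \<Rightarrow> 'x \<Rightarrow> 'x) \<Rightarrow> ('x \<Rightarrow> 's letter list set)
    \<Rightarrow> ('s letter list \<times> 's letter list) set" where
  "pres_homot X U I \<phi> Rel =
     {(w, w'). w \<in> lists (letters U I) \<and> w' \<in> lists (letters U I) \<and>
               equivclp (pres_step X U I \<phi> Rel (pres_base X)) w w'}"

definition PCay_V ::
  "'x set \<Rightarrow> 's set \<Rightarrow> 's set \<Rightarrow> ('s \<Rightarrow> 'x \<Rightarrow> 'x) \<Rightarrow> ('x \<Rightarrow> 's letter list set)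
    \<Rightarrow> 's letter list set set" where
  "PCay_V X U I \<phi> Rel = lists (letters U I) // pres_homot X U I \<phi> Rel"

text \<open>The dart (C, a) leaves vertex C along the lift of the edge labelled a.\<close>
definition PCay_head ::
  "'x set \<Rightarrow> 's set \<Rightarrow> 's set \<Rightarrow> ('s \<Rightarrow> 'x \<Rightarrow> 'x) \<Rightarrow> ('x \<Rightarrow> 's letter list set)
    \<Rightarrow> 's letter list set \<Rightarrow> 's letter \<Rightarrow> 's letter list set" where
  "PCay_head X U I \<phi> Rel C a = pres_homot X U I \<phi> Rel `` {(SOME w. w \<in> C) @ [a]}"

text \<open>An edge of PCay(P) is a pair {dart, reverse dart}; its ends are the tails
of its darts.\<close>
definition PCay_E ::
  "'x set \<Rightarrow> 's set \<Rightarrow> 's set \<Rightarrow> ('s \<Rightarrow> 'x \<Rightarrow> 'x) \<Rightarrow> ('x \<Rightarrow> 's letter list set)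
    \<Rightarrow> ('s letter list set \<times> 's letter) set set" where
  "PCay_E X U I \<phi> Rel =
     {{(C, a), (PCay_head X U I \<phi> Rel C a, inv_letter I a)} | C a.
        C \<in> PCay_V X U I \<phi> Rel \<and> a \<in> letters U I}"

definition PCay_ends :: "('v \<times> 'l) set \<Rightarrow> 'v set" where
  "PCay_ends E = fst ` E"

end

theory Submission
  imports Defs
begin

lemma mg_iso_sym:
  assumes "mg_iso V E en V' E' en'" and "\<forall>e\<in>E. en e \<subseteq> V"
  shows "mg_iso V' E' en' V E en"
proof -
  obtain fv fe where f: "bij_betw fv V V'" "bij_betw fe E E'" "\<forall>e\<in>E. en' (fe e) = fv ` en e"
    using assms(1) unfolding mg_iso_def by blast
  have "\<forall>e'\<in>E'. en (inv_into E fe e') = inv_into V fv ` en' e'"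
  proof
    fix e' assume e': "e' \<in> E'"
    define e where "e = inv_into E fe e'"
    have e: "e \<in> E" "fe e = e'" using e' f(2) unfolding e_def
      by (auto simp: bij_betw_def inv_into_into f_inv_into_f)
    have "inv_into V fv ` en' e' = inv_into V fv ` fv ` en e" using f(3) e by auto
    also have "\<dots> = en e" using assms(2) e(1) f(1)
      by (auto simp: bij_betw_def inv_into_f_f subsetD image_iff)
    finally show "en (inv_into E fe e') = inv_into V fv ` en' e'" unfolding e_def by simp
  qed
  then show ?thesis unfolding mg_iso_def
    using bij_betw_inv_into[OF f(1)] bij_betw_inv_into[OF f(2)] by blast
qed


locale bic = group G for G (structure) +
  fixes R L S A B :: "'g set" and f :: "'g \<Rightarrow> 'g"
  assumes RG: "R \<subseteq> carrier G" and LG: "L \<subseteq> carrier G" and SG: "S \<subseteq> carrier G"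
    and RA: "R = A \<union> (\<lambda>x. inv x) ` A" and AD: "A \<inter> (\<lambda>x. inv x) ` A = {}"
    and LB: "L = B \<union> (\<lambda>x. inv x) ` B" and BD: "B \<inter> (\<lambda>x. inv x) ` B = {}"
    and fAB: "bij_betw f A B"
begin

definition "X = {0, 1::nat}"
definition "U = (\<lambda>r. (r, 0::nat)) ` A"
definition "I = (\<lambda>s. (s, 2::nat)) ` S"
definition "\<phi> = (\<lambda>(s::'g \<times> nat) (x::nat). if snd s = 2 then 1 - x else x)"

definition stp :: "'g \<times> bool \<Rightarrow> ('g \<times> nat) letter \<Rightarrow> 'g \<times> bool" where
  "stp v c = (if snd (fst c) = 2 then
       (if snd v then (fst v \<otimes> inv (fst (fst c)), False) else (fst v \<otimes> fst (fst c), True))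
     else if snd v then (fst v \<otimes> (if snd c then f (fst (fst c)) else inv (f (fst (fst c)))), True)
     else (fst v \<otimes> (if snd c then fst (fst c) else inv (fst (fst c))), False))"

definition "lift v w = fold (\<lambda>c v. stp v c) w v"

definition "Rel x = {w \<in> lists (letters U I). walk_end X \<phi> x w = x \<and> lift (\<one>, x = 1) w = (\<one>, x = 1)}"

lemma AG: "A \<subseteq> carrier G" using RG RA by auto
lemma BG: "B \<subseteq> carrier G" using LG LB by auto
lemma fB: "r \<in> A \<Longrightarrow> f r \<in> B" using fAB bij_betwE by blast
lemma fG: "r \<in> A \<Longrightarrow> f r \<in> carrier G" using fB BG by auto

lemma letters_iff: "c \<in> letters U I \<longleftrightarrow>
   (\<exists>r\<in>A. c = ((r,0),True) \<or> c = ((r,0),False)) \<or> (\<exists>s\<in>S. c = ((s,2),True))"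
  unfolding letters_def U_def I_def by auto

lemma inv_letter_U: "inv_letter I ((r,0),d) = ((r,0), \<not> d)"
  unfolding inv_letter_def I_def by auto
lemma inv_letter_I: "s \<in> S \<Longrightarrow> inv_letter I ((s,2),d) = ((s,2), d)"
  unfolding inv_letter_def I_def by auto

lemma inv_letter_in: "c \<in> letters U I \<Longrightarrow> inv_letter I c \<in> letters U I"
  unfolding letters_iff by (auto simp: inv_letter_U inv_letter_I)
lemma inv_letter_inv: "c \<in> letters U I \<Longrightarrow> inv_letter I (inv_letter I c) = c"
  unfolding letters_iff by (auto simp: inv_letter_U inv_letter_I)

lemma bi_V_iff: "v \<in> bi_V G \<longleftrightarrow> fst v \<in> carrier G"
  unfolding bi_V_def by (simp add: mem_Times_iff)

lemma stp_in: "v \<in> bi_V G \<Longrightarrow> c \<in> letters U I \<Longrightarrow> stp v c \<in> bi_V G"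
  unfolding letters_iff bi_V_iff stp_def using AG SG fG by auto

lemma stp_inv: "v \<in> bi_V G \<Longrightarrow> c \<in> letters U I \<Longrightarrow> stp (stp v c) (inv_letter I c) = v"
  unfolding letters_iff bi_V_iff
  apply (cases v)
  using AG SG fG by (auto simp: stp_def inv_letter_U inv_letter_I m_assoc)

lemma lift_in: "v \<in> bi_V G \<Longrightarrow> w \<in> lists (letters U I) \<Longrightarrow> lift v w \<in> bi_V G"
  by (induction w arbitrary: v) (auto simp: lift_def stp_in)

lemma lift_Nil[simp]: "lift v [] = v" by (simp add: lift_def)
lemma lift_Cons[simp]: "lift v (c # w) = lift (stp v c) w" by (simp add: lift_def)
lemma lift_append[simp]: "lift v (u @ w) = lift (lift v u) w" by (simp add: lift_def)

definition "invw w = map (inv_letter I) (rev w)"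

lemma invw_in: "w \<in> lists (letters U I) \<Longrightarrow> invw w \<in> lists (letters U I)"
  unfolding invw_def using inv_letter_in by auto

lemma lift_invw: "v \<in> bi_V G \<Longrightarrow> w \<in> lists (letters U I) \<Longrightarrow> lift (lift v w) (invw w) = v"
proof (induction w arbitrary: v)
  case Nil then show ?case by (simp add: invw_def)
next
  case (Cons c w)
  have "lift (lift v (c # w)) (invw (c # w)) = stp (lift (lift (stp v c) w) (invw w)) (inv_letter I c)"
    by (simp add: invw_def lift_def)
  also have "\<dots> = stp (stp v c) (inv_letter I c)" using Cons stp_in by auto
  also have "\<dots> = v" using Cons stp_inv by auto
  finally show ?case .
qed

lemma stp_equiv: "h \<in> carrier G \<Longrightarrow> g \<in> carrier G \<Longrightarrow> c \<in> letters U I \<Longrightarrow>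
   stp (h \<otimes> g, b) c = (h \<otimes> fst (stp (g,b) c), snd (stp (g,b) c))"
  unfolding letters_iff using AG SG fG by (auto simp: stp_def m_assoc)

lemma lift_equiv: "h \<in> carrier G \<Longrightarrow> g \<in> carrier G \<Longrightarrow> w \<in> lists (letters U I) \<Longrightarrow>
   lift (h \<otimes> g, b) w = (h \<otimes> fst (lift (g,b) w), snd (lift (g,b) w))"
proof (induction w arbitrary: g b)
  case Nil then show ?case by simp
next
  case (Cons c w)
  obtain g' b' where e: "stp (g,b) c = (g', b')" by force
  have g': "g' \<in> carrier G" using stp_in[of "(g,b)" c] Cons e by (auto simp: bi_V_iff)
  show ?case using Cons e g' by (simp add: stp_equiv)
qed


lemma X_base: "pres_base X \<in> X"
  unfolding pres_base_def by (rule someI[of _ 0]) (simp add: X_def)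

lemma act_letter_lemma: "x \<in> X \<Longrightarrow> c \<in> letters U I \<Longrightarrow>
   act_letter X \<phi> c x \<in> X \<and> (act_letter X \<phi> c x = 1 \<longleftrightarrow> snd (stp (g, x = 1) c))"
proof -
  assume x: "x \<in> X" and c: "c \<in> letters U I"
  have ii: "inv_into X (\<lambda>x. x) x = x"
    using x inv_into_f_f[of "\<lambda>x. x" X x] by simp
  have x01: "x = 0 \<or> x = 1" using x by (simp add: X_def)
  from c consider r where "c = ((r,0),True)" | r where "c = ((r,0),False)" | s where "c = ((s,2),True)"
    unfolding letters_iff by blast
  then show ?thesis
  proof cases
    case 1 then show ?thesis using x by (simp add: act_letter_def \<phi>_def stp_def)
  next
    case 2 then show ?thesis using x ii by (simp add: act_letter_def \<phi>_def stp_def)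
  next
    case 3 then show ?thesis using x01 by (auto simp: act_letter_def \<phi>_def stp_def X_def)
  qed
qed

lemma walk_lemma: "x \<in> X \<Longrightarrow> w \<in> lists (letters U I) \<Longrightarrow>
   walk_end X \<phi> x w \<in> X \<and> (walk_end X \<phi> x w = 1 \<longleftrightarrow> snd (lift (g, x = 1) w))"
proof (induction w arbitrary: x g)
  case Nil then show ?case by (simp add: walk_end_def)
next
  case (Cons c w)
  obtain g' b' where e: "stp (g, x = 1) c = (g', b')" by force
  have a: "act_letter X \<phi> c x \<in> X" "(act_letter X \<phi> c x = 1) = b'"
    using act_letter_lemma[of x c g] Cons e by auto
  have "walk_end X \<phi> x (c # w) = walk_end X \<phi> (act_letter X \<phi> c x) w"
    by (simp add: walk_end_def)
  moreover have "lift (g, x = 1) (c # w) = lift (g', act_letter X \<phi> c x = 1) w"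
    using e a by simp
  ultimately show ?case using Cons.IH[of "act_letter X \<phi> c x" g'] Cons.prems a by simp
qed

abbreviation "x0 \<equiv> pres_base X"
abbreviation "bv \<equiv> (\<one>, x0 = 1)"
abbreviation "P \<equiv> pres_step X U I \<phi> Rel x0"

lemma bv_in: "bv \<in> bi_V G" by (simp add: bi_V_iff)

lemma step_pres: "P w w' \<Longrightarrow> lift bv w = lift bv w'"
proof -
  assume st: "P w w'"
  then have wl: "w \<in> lists (letters U I)" unfolding pres_step_def by auto
  from st consider (bt) u v a where "a \<in> letters U I" "w = u @ [a, inv_letter I a] @ v" "w' = u @ v"
    | (rl) u v r where "r \<in> Rel (walk_end X \<phi> x0 u)" "w = u @ r @ v" "w' = u @ v"
    unfolding pres_step_def by blast
  then show ?thesis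
  proof cases
    case bt
    then have u: "u \<in> lists (letters U I)" using wl by auto
    have "lift bv u \<in> bi_V G" using lift_in[OF bv_in u] .
    then show ?thesis using bt stp_inv by simp
  next
    case rl
    then have u: "u \<in> lists (letters U I)" and r: "r \<in> lists (letters U I)" using wl by auto
    define y where "y = walk_end X \<phi> x0 u"
    obtain g b where gb: "lift bv u = (g, b)" by force
    have g: "g \<in> carrier G" using lift_in[OF bv_in u] gb by (simp add: bi_V_iff)
    have b: "b = (y = 1)" using walk_lemma[OF X_base u, of \<one>] gb y_def by simp
    have rr: "lift (\<one>, y = 1) r = (\<one>, y = 1)" using rl y_def unfolding Rel_def by auto
    have "lift (g, b) r = lift (g \<otimes> \<one>, b) r" using g by simp
    also have "\<dots> = (g, b)" using lift_equiv[OF g one_closed r, of b] rr b g by simp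
    finally show ?thesis using rl gb by simp
  qed
qed

lemma homot_lift: "equivclp P w w' \<Longrightarrow> lift bv w = lift bv w'"
proof (induction rule: equivclp_induct)
  case base then show ?case by simp
next
  case (step y z) then show ?case using step_pres by metis
qed

lemma homot_bt: "u \<in> lists (letters U I) \<Longrightarrow> v \<in> lists (letters U I) \<Longrightarrow> a \<in> letters U I \<Longrightarrow>
   equivclp P (u @ v) (u @ [a, inv_letter I a] @ v)"
proof -
  assume u: "u \<in> lists (letters U I)" and v: "v \<in> lists (letters U I)" and a: "a \<in> letters U I"
  have l: "u @ [a, inv_letter I a] @ v \<in> lists (letters U I)" "u @ v \<in> lists (letters U I)"
    using u v a inv_letter_in by auto
  have e: "\<exists>u' v' a'. a' \<in> letters U I \<and> u @ [a, inv_letter I a] @ v = u' @ [a', inv_letter I a'] @ v' \<and> u @ v = u' @ v'"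
    using a by blast
  have "P (u @ [a, inv_letter I a] @ v) (u @ v)" unfolding pres_step_def using l e by blast
  then show ?thesis by blast
qed

lemma homot_ins: "u \<in> lists (letters U I) \<Longrightarrow> v \<in> lists (letters U I) \<Longrightarrow> w \<in> lists (letters U I) \<Longrightarrow>
   equivclp P (u @ v) (u @ invw w @ w @ v)"
proof (induction w arbitrary: v)
  case Nil then show ?case by (simp add: invw_def)
next
  case (Cons a w)
  have a: "a \<in> letters U I" and w: "w \<in> lists (letters U I)" using Cons by auto
  have "equivclp P (u @ v) (u @ invw w @ w @ v)" using Cons w by auto
  also have "equivclp P (u @ invw w @ w @ v) ((u @ invw w) @ [inv_letter I a, inv_letter I (inv_letter I a)] @ (w @ v))"
    using homot_bt[of "u @ invw w" "w @ v" "inv_letter I a"] Cons.prems invw_in[OF w] inv_letter_in[OF a]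
    by (simp add: inv_letter_inv[OF a])
  finally show ?case by (simp add: invw_def inv_letter_inv[OF a])
qed

lemma lift_homot: "w \<in> lists (letters U I) \<Longrightarrow> w' \<in> lists (letters U I) \<Longrightarrow> lift bv w = lift bv w' \<Longrightarrow>
   equivclp P w w'"
proof -
  assume w: "w \<in> lists (letters U I)" and w': "w' \<in> lists (letters U I)" and e: "lift bv w = lift bv w'"
  have 1: "equivclp P w (w @ invw w' @ w')" using homot_ins[OF w _ w', of "[]"] by simp
  define r where "r = w @ invw w'"
  have rl: "r \<in> lists (letters U I)" using w invw_in[OF w'] r_def by simp
  have lr: "lift bv r = bv" using r_def e lift_invw[OF bv_in w'] by simp
  have we: "walk_end X \<phi> x0 r = x0"
    using walk_lemma[OF X_base rl, of \<one>] lr X_base unfolding X_def by auto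
  have "r \<in> Rel (walk_end X \<phi> x0 [])" using rl lr we by (simp add: Rel_def walk_end_def)
  then have "\<exists>u v ra. ra \<in> Rel (walk_end X \<phi> x0 u) \<and> r @ w' = u @ ra @ v \<and> w' = u @ v"
    by (intro exI[of _ "[]"] exI[of _ w'] exI[of _ r]) simp
  then have "P (r @ w') w'" unfolding pres_step_def using rl w' by auto
  then have "equivclp P (w @ invw w' @ w') w'" using r_def by auto
  with 1 show ?thesis by (rule equivclp_trans)
qed

lemma homot_char: "pres_homot X U I \<phi> Rel =
   {(w, w'). w \<in> lists (letters U I) \<and> w' \<in> lists (letters U I) \<and> lift bv w = lift bv w'}"
  unfolding pres_homot_def using homot_lift lift_homot by blast


abbreviation "H \<equiv> pres_homot X U I \<phi> Rel"
definition "Phi C = lift bv (SOME w. w \<in> C)"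

lemma cls: "w \<in> lists (letters U I) \<Longrightarrow> H``{w} = {w'. w' \<in> lists (letters U I) \<and> lift bv w' = lift bv w}"
  unfolding homot_char by auto

lemma Phi_cls: "w \<in> lists (letters U I) \<Longrightarrow> Phi (H``{w}) = lift bv w"
proof -
  assume w: "w \<in> lists (letters U I)"
  have "w \<in> H``{w}" using cls[OF w] w by simp
  then have "(SOME w'. w' \<in> H``{w}) \<in> H``{w}" by (rule someI)
  then show ?thesis using cls[OF w] unfolding Phi_def by simp
qed

lemma V_char: "C \<in> PCay_V X U I \<phi> Rel \<longleftrightarrow> (\<exists>w\<in>lists (letters U I). C = H``{w})"
  unfolding PCay_V_def quotient_def by blast

lemma Phi_in: "C \<in> PCay_V X U I \<phi> Rel \<Longrightarrow> Phi C \<in> bi_V G"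
proof -
  assume "C \<in> PCay_V X U I \<phi> Rel"
  then obtain w where w: "w \<in> lists (letters U I)" "C = H``{w}" unfolding V_char by blast
  then have "Phi C = lift bv w" using Phi_cls by simp
  then show ?thesis using lift_in[OF bv_in w(1)] by simp
qed

lemma Phi_inj: "C \<in> PCay_V X U I \<phi> Rel \<Longrightarrow> D \<in> PCay_V X U I \<phi> Rel \<Longrightarrow> Phi C = Phi D \<Longrightarrow> C = D"
proof -
  assume C: "C \<in> PCay_V X U I \<phi> Rel" and D: "D \<in> PCay_V X U I \<phi> Rel" and e: "Phi C = Phi D"
  obtain w where w: "w \<in> lists (letters U I)" "C = H``{w}" using C unfolding V_char by blast
  obtain w' where w': "w' \<in> lists (letters U I)" "D = H``{w'}" using D unfolding V_char by blast
  have "lift bv w = lift bv w'" using e w w' Phi_cls by simp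
  then show ?thesis using w w' cls[OF w(1)] cls[OF w'(1)] by simp
qed

lemma head_V: "C \<in> PCay_V X U I \<phi> Rel \<Longrightarrow> a \<in> letters U I \<Longrightarrow>
   PCay_head X U I \<phi> Rel C a \<in> PCay_V X U I \<phi> Rel \<and> Phi (PCay_head X U I \<phi> Rel C a) = stp (Phi C) a"
proof -
  assume C: "C \<in> PCay_V X U I \<phi> Rel" and a: "a \<in> letters U I"
  then obtain w where w: "w \<in> lists (letters U I)" "C = H``{w}" unfolding V_char by blast
  define w0 where "w0 = (SOME w. w \<in> C)"
  have "w \<in> C" using w cls by simp
  then have "w0 \<in> C" unfolding w0_def by (rule someI)
  then have w0: "w0 \<in> lists (letters U I)" "lift bv w0 = lift bv w" using w cls by auto
  have hd: "PCay_head X U I \<phi> Rel C a = H``{w0 @ [a]}" unfolding PCay_head_def w0_def ..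
  have l: "w0 @ [a] \<in> lists (letters U I)" using w0 a by simp
  have "H``{w0 @ [a]} \<in> PCay_V X U I \<phi> Rel" using l unfolding V_char by blast
  moreover have "Phi (H``{w0 @ [a]}) = stp (Phi C) a" using Phi_cls[OF l] Phi_cls[OF w(1)] w w0 by simp
  ultimately show ?thesis using hd by simp
qed

lemma edge_form: "e \<in> bi_E G R L S \<Longrightarrow> \<exists>x c. x \<in> bi_V G \<and> c \<in> letters U I \<and> e = {x, stp x c}"
proof -
  assume e: "e \<in> bi_E G R L S"
  then consider (r) g r where "g \<in> carrier G" "r \<in> R" "e = {(g, False), (g \<otimes> r, False)}"
    | (l) g l where "g \<in> carrier G" "l \<in> L" "e = {(g, True), (g \<otimes> l, True)}"
    | (s) g s where "g \<in> carrier G" "s \<in> S" "e = {(g, False), (g \<otimes> s, True)}"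
    unfolding bi_E_def by blast
  then show ?thesis
  proof cases
    case r
    show ?thesis
    proof (cases "r \<in> A")
      case True
      then show ?thesis using r by (intro exI[of _ "(g, False)"] exI[of _ "((r,0),True)"])
          (auto simp: bi_V_iff letters_iff stp_def)
    next
      case False
      then obtain a where a: "a \<in> A" "r = inv a" using r RA by auto
      then show ?thesis using r by (intro exI[of _ "(g, False)"] exI[of _ "((a,0),False)"])
          (auto simp: bi_V_iff letters_iff stp_def)
    qed
  next
    case l
    show ?thesis
    proof (cases "l \<in> B")
      case True
      then obtain a where a: "a \<in> A" "l = f a" using fAB by (metis bij_betw_def imageE)
      then show ?thesis using l by (intro exI[of _ "(g, True)"] exI[of _ "((a,0),True)"])
          (auto simp: bi_V_iff letters_iff stp_def)
    next
      case False
      then obtain b where b: "b \<in> B" "l = inv b" using l LB by auto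
      then obtain a where a: "a \<in> A" "b = f a" using fAB by (metis bij_betw_def imageE)
      then show ?thesis using l b by (intro exI[of _ "(g, True)"] exI[of _ "((a,0),False)"])
          (auto simp: bi_V_iff letters_iff stp_def)
    qed
  next
    case s
    then show ?thesis by (intro exI[of _ "(g, False)"] exI[of _ "((s,2),True)"])
          (auto simp: bi_V_iff letters_iff stp_def)
  qed
qed

lemma reach: "(\<lambda>a b. \<exists>e\<in>bi_E G R L S. id e = {a, b})\<^sup>*\<^sup>* bv v \<Longrightarrow>
   \<exists>w\<in>lists (letters U I). lift bv w = v"
proof (induction rule: rtranclp_induct)
  case base
  then show ?case by (intro bexI[of _ "[]"]) auto
next
  case (step a b)
  then obtain w where w: "w \<in> lists (letters U I)" "lift bv w = a" by blast
  have aV: "a \<in> bi_V G" using w lift_in bv_in by auto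
  from step obtain e where "e \<in> bi_E G R L S" "e = {a, b}" by auto
  then obtain x c where xc: "x \<in> bi_V G" "c \<in> letters U I" "{a, b} = {x, stp x c}"
    using edge_form by metis
  show ?case
  proof (cases "a = x")
    case True
    then have "b = stp a c" using xc by (auto simp: doubleton_eq_iff)
    then show ?thesis using w xc by (intro bexI[of _ "w @ [c]"]) auto
  next
    case False
    then have "a = stp x c" "b = x" using xc by (auto simp: doubleton_eq_iff)
    then have "b = stp a (inv_letter I c)" using stp_inv xc by simp
    then show ?thesis using w xc inv_letter_in by (intro bexI[of _ "w @ [inv_letter I c]"]) auto
  qed
qed

lemma stp_inj: "v \<in> bi_V G \<Longrightarrow> a \<in> letters U I \<Longrightarrow> b \<in> letters U I \<Longrightarrow> stp v a = stp v b \<Longrightarrow> a = b"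
proof -
  assume v: "v \<in> bi_V G" and a: "a \<in> letters U I" and b: "b \<in> letters U I" and e: "stp v a = stp v b"
  obtain g bb where vg: "v = (g, bb)" by force
  have g: "g \<in> carrier G" using v vg by (simp add: bi_V_iff)
  have canc: "\<And>x y. x \<in> carrier G \<Longrightarrow> y \<in> carrier G \<Longrightarrow> g \<otimes> x = g \<otimes> y \<Longrightarrow> x = y"
    using g by simp
  have ii: "\<And>x y. x \<in> carrier G \<Longrightarrow> y \<in> carrier G \<Longrightarrow> inv x = inv y \<Longrightarrow> x = y"
    by (metis inv_inv)
  have ad: "\<And>r r'. r \<in> A \<Longrightarrow> r' \<in> A \<Longrightarrow> r \<noteq> inv r'" using AD by blast
  have bd: "\<And>r r'. r \<in> A \<Longrightarrow> r' \<in> A \<Longrightarrow> f r \<noteq> inv (f r')" using BD fB by blast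
  have fi: "\<And>r r'. r \<in> A \<Longrightarrow> r' \<in> A \<Longrightarrow> f r = f r' \<Longrightarrow> r = r'" using fAB by (meson bij_betw_def inj_onD)
  have aG: "\<And>r. r \<in> A \<Longrightarrow> r \<in> carrier G" and sG: "\<And>s. s \<in> S \<Longrightarrow> s \<in> carrier G" using AG SG by auto
  from a b e show ?thesis unfolding letters_iff vg
    apply (cases bb)
    apply (auto simp: stp_def)
    by (metis canc ii ad bd fi aG sG fG inv_closed)+
qed


lemma edge_in: "v \<in> bi_V G \<Longrightarrow> a \<in> letters U I \<Longrightarrow> {v, stp v a} \<in> bi_E G R L S"
proof -
  assume v: "v \<in> bi_V G" and a: "a \<in> letters U I"
  obtain g bb where vg: "v = (g, bb)" by force
  have g: "g \<in> carrier G" using v vg by (simp add: bi_V_iff)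
  have eR: "\<And>g r. g \<in> carrier G \<Longrightarrow> r \<in> R \<Longrightarrow> {(g,False),(g \<otimes> r,False)} \<in> bi_E G R L S"
    unfolding bi_E_def by blast
  have eL: "\<And>g r. g \<in> carrier G \<Longrightarrow> r \<in> L \<Longrightarrow> {(g,True),(g \<otimes> r,True)} \<in> bi_E G R L S"
    unfolding bi_E_def by blast
  have eS: "\<And>g r. g \<in> carrier G \<Longrightarrow> r \<in> S \<Longrightarrow> {(g,False),(g \<otimes> r,True)} \<in> bi_E G R L S"
    unfolding bi_E_def by blast
  have ir: "\<And>r. r \<in> A \<Longrightarrow> r \<in> R" "\<And>r. r \<in> A \<Longrightarrow> inv r \<in> R" using RA by auto
  have il: "\<And>r. r \<in> A \<Longrightarrow> f r \<in> L" "\<And>r. r \<in> A \<Longrightarrow> inv (f r) \<in> L" using LB fB by auto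
  from a consider r where "r \<in> A" "a = ((r,0),True)" | r where "r \<in> A" "a = ((r,0),False)"
    | s where "s \<in> S" "a = ((s,2),True)"
    unfolding letters_iff by blast
  then show ?thesis
  proof cases
    case 1 then show ?thesis using g eR eL ir il by (cases bb) (auto simp: vg stp_def)
  next
    case 2 then show ?thesis using g eR eL ir il by (cases bb) (auto simp: vg stp_def)
  next
    case 3
    have sG: "s \<in> carrier G" using 3 SG by auto
    show ?thesis
    proof (cases bb)
      case True
      have "{(g \<otimes> inv s, False), ((g \<otimes> inv s) \<otimes> s, True)} \<in> bi_E G R L S"
        using eS g sG 3 by simp
      moreover have "(g \<otimes> inv s) \<otimes> s = g" using g sG by (simp add: m_assoc)
      ultimately show ?thesis using 3 True by (auto simp: vg stp_def insert_commute)
    next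
      case False
      then show ?thesis using 3 eS g by (auto simp: vg stp_def)
    qed
  qed
qed

lemma S_nonempty:
  assumes conn: "mg_connected (bi_V G) (bi_E G R L S) id"
  shows "S \<noteq> {}"
proof
  assume S0: "S = {}"
  have "(\<lambda>a b. \<exists>e\<in>bi_E G R L S. id e = {a, b})\<^sup>*\<^sup>* (\<one>, False) (\<one>, True)"
    using conn unfolding mg_connected_def by (simp add: bi_V_iff)
  then have "snd (\<one>::'g, False) = snd (\<one>::'g, True)"
  proof (induction rule: rtranclp_induct)
    case base then show ?case by simp
  next
    case (step a b)
    then obtain e where "e \<in> bi_E G R L S" "e = {a, b}" by auto
    then have "snd a = snd b" using S0 unfolding bi_E_def by (auto simp: doubleton_eq_iff)
    then show ?case using step by simp
  qed
  then show False by simp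
qed

lemma pp: "S \<noteq> {} \<Longrightarrow> partite_presentation X U I \<phi> Rel"
proof -
  assume S: "S \<noteq> {}"
  then obtain s where s: "s \<in> S" by blast
  have b1: "bij_betw (\<lambda>x::nat. x) X X" by (simp add: bij_betw_def)
  have b2: "bij_betw (\<lambda>x::nat. 1 - x) X X" unfolding bij_betw_def inj_on_def X_def by auto
  have bij: "\<forall>t\<in>U \<union> I. bij_betw (\<phi> t) X X"
    unfolding U_def I_def \<phi>_def using b1 b2 by auto
  have inv: "\<forall>t\<in>I. \<forall>x\<in>X. \<phi> t (\<phi> t x) = x \<and> \<phi> t x \<noteq> x"
    unfolding I_def \<phi>_def X_def by auto
  have c: "((s,2),True) \<in> letters U I" using s letters_iff by blast
  have tr: "\<forall>x\<in>X. \<forall>y\<in>X. \<exists>w\<in>lists (letters U I). walk_end X \<phi> x w = y"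
  proof (intro ballI)
    fix x y assume x: "x \<in> X" and y: "y \<in> X"
    show "\<exists>w\<in>lists (letters U I). walk_end X \<phi> x w = y"
    proof (cases "x = y")
      case True then show ?thesis by (intro bexI[of _ "[]"]) (auto simp: walk_end_def)
    next
      case False
      then have "walk_end X \<phi> x [((s,2),True)] = y" using x y
        by (auto simp: walk_end_def act_letter_def \<phi>_def X_def)
      then show ?thesis using c by (intro bexI[of _ "[((s,2),True)]"]) auto
    qed
  qed
  show ?thesis unfolding partite_presentation_def
    using bij inv tr by (auto simp: X_def U_def I_def Rel_def)
qed

lemma ends_E: "E \<in> PCay_E X U I \<phi> Rel \<Longrightarrow> PCay_ends E \<subseteq> PCay_V X U I \<phi> Rel"
proof -
  assume "E \<in> PCay_E X U I \<phi> Rel"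
  then obtain C a where "E = {(C, a), (PCay_head X U I \<phi> Rel C a, inv_letter I a)}"
     "C \<in> PCay_V X U I \<phi> Rel" "a \<in> letters U I"
    unfolding PCay_E_def by blast
  then show ?thesis using head_V[of C a] unfolding PCay_ends_def by simp
qed

lemma iso_rev:
  assumes conn: "mg_connected (bi_V G) (bi_E G R L S) id"
  shows "mg_iso (PCay_V X U I \<phi> Rel) (PCay_E X U I \<phi> Rel) PCay_ends (bi_V G) (bi_E G R L S) id"
proof -
  let ?V = "PCay_V X U I \<phi> Rel" and ?E = "PCay_E X U I \<phi> Rel" and ?hd = "PCay_head X U I \<phi> Rel"
  have surjV: "\<exists>w\<in>lists (letters U I). lift bv w = v" if "v \<in> bi_V G" for v
    using conn that bv_in reach unfolding mg_connected_def by blast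
  have bV: "bij_betw Phi ?V (bi_V G)"
    unfolding bij_betw_def
  proof (intro conjI)
    show "inj_on Phi ?V" using Phi_inj by (meson inj_onI)
    show "Phi ` ?V = bi_V G"
    proof
      show "Phi ` ?V \<subseteq> bi_V G" using Phi_in by auto
      show "bi_V G \<subseteq> Phi ` ?V"
      proof
        fix v assume "v \<in> bi_V G"
        then obtain w where w: "w \<in> lists (letters U I)" "lift bv w = v" using surjV by blast
        then have "H``{w} \<in> ?V" "Phi (H``{w}) = v" using V_char Phi_cls by auto
        then show "v \<in> Phi ` ?V" by blast
      qed
    qed
  qed
  define fe where "fe E = Phi ` PCay_ends E" for E :: "(('g \<times> nat) letter list set \<times> ('g \<times> nat) letter) set"
  have Eform: "E \<in> ?E \<longleftrightarrow> (\<exists>C a. E = {(C, a), (?hd C a, inv_letter I a)} \<and> C \<in> ?V \<and> a \<in> letters U I)" for E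
    unfolding PCay_E_def by blast
  have feE: "fe {(C, a), (?hd C a, inv_letter I a)} = {Phi C, stp (Phi C) a}" if "C \<in> ?V" "a \<in> letters U I" for C a
    using head_V[OF that] by (simp add: fe_def PCay_ends_def)
  have bE: "bij_betw fe ?E (bi_E G R L S)"
    unfolding bij_betw_def
  proof (intro conjI)
    show "inj_on fe ?E"
    proof (rule inj_onI)
      fix E1 E2 assume E1: "E1 \<in> ?E" and E2: "E2 \<in> ?E" and e: "fe E1 = fe E2"
      obtain C a where Ca: "E1 = {(C, a), (?hd C a, inv_letter I a)}" "C \<in> ?V" "a \<in> letters U I"
        using E1 Eform by blast
      obtain D b where Db: "E2 = {(D, b), (?hd D b, inv_letter I b)}" "D \<in> ?V" "b \<in> letters U I"
        using E2 Eform by blast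
      have ee: "{Phi C, stp (Phi C) a} = {Phi D, stp (Phi D) b}" using e Ca Db feE by simp
      have PC: "Phi C \<in> bi_V G" "Phi D \<in> bi_V G" using Ca Db Phi_in by auto
      show "E1 = E2"
      proof (cases "Phi C = Phi D")
        case True
        then have CD: "C = D" using Phi_inj Ca Db by blast
        have "stp (Phi C) a = stp (Phi C) b" using ee True by (auto simp: doubleton_eq_iff)
        then have "a = b" using stp_inj PC Ca Db by blast
        then show ?thesis using Ca Db CD by simp
      next
        case False
        then have e1: "Phi C = stp (Phi D) b" and e2: "stp (Phi C) a = Phi D"
          using ee by (auto simp: doubleton_eq_iff)
        have e3: "stp (Phi C) (inv_letter I b) = Phi D" using e1 stp_inv PC Db by simp
        have "stp (Phi C) a = stp (Phi C) (inv_letter I b)" using e2 e3 by simp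
        then have ab: "a = inv_letter I b"
          by (rule stp_inj[OF PC(1) Ca(3) inv_letter_in[OF Db(3)]])
        then have ba: "b = inv_letter I a" using inv_letter_inv Db by simp
        have hC: "?hd C a \<in> ?V" "Phi (?hd C a) = Phi D" using head_V[OF Ca(2,3)] e2 by auto
        have h1: "?hd C a = D" using Phi_inj[OF hC(1) Db(2) hC(2)] .
        have hD: "?hd D b \<in> ?V" "Phi (?hd D b) = Phi C" using head_V[OF Db(2,3)] e1 by auto
        have h2: "?hd D b = C" using Phi_inj[OF hD(1) Ca(2) hD(2)] .
        have "E2 = {(D, b), (C, inv_letter I b)}" using Db(1) h2 by simp
        then have "E2 = {(D, inv_letter I a), (C, a)}" using ab inv_letter_inv[OF Db(3)] by simp
        then show ?thesis using Ca h1 by (simp add: insert_commute)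
      qed
    qed
    show "fe ` ?E = bi_E G R L S"
    proof
      show "fe ` ?E \<subseteq> bi_E G R L S"
      proof
        fix e assume "e \<in> fe ` ?E"
        then obtain E where E: "E \<in> ?E" "e = fe E" by blast
        then obtain C a where "E = {(C, a), (?hd C a, inv_letter I a)}" "C \<in> ?V" "a \<in> letters U I"
          unfolding PCay_E_def by blast
        then have "e = fe {(C, a), (?hd C a, inv_letter I a)}" "C \<in> ?V" "a \<in> letters U I"
          using E by auto
        then show "e \<in> bi_E G R L S" using feE edge_in Phi_in by simp
      qed
      show "bi_E G R L S \<subseteq> fe ` ?E"
      proof
        fix e assume "e \<in> bi_E G R L S"
        then obtain x c where xc: "x \<in> bi_V G" "c \<in> letters U I" "e = {x, stp x c}"
          using edge_form by blast
        then obtain w where w: "w \<in> lists (letters U I)" "lift bv w = x" using surjV by blast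
        then have C: "H``{w} \<in> ?V" "Phi (H``{w}) = x" using V_char Phi_cls by auto
        then have "{(H``{w}, c), (?hd (H``{w}) c, inv_letter I c)} \<in> ?E" unfolding PCay_E_def using xc C by blast
        moreover have "fe {(H``{w}, c), (?hd (H``{w}) c, inv_letter I c)} = e" using feE C xc by simp
        ultimately show "e \<in> fe ` ?E" by (metis image_eqI)
      qed
    qed
  qed
  show ?thesis unfolding mg_iso_def using bV bE by (intro exI[of _ Phi] exI[of _ fe]) (auto simp: fe_def)
qed


lemma main:
  assumes conn: "mg_connected (bi_V G) (bi_E G R L S) id"
  shows "\<exists>(X :: nat set) (U :: ('g \<times> nat) set) I \<phi> Rel.
           partite_presentation X U I \<phi> Rel \<and> card X = 2 \<and>
           mg_iso (bi_V G) (bi_E G R L S) id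
                  (PCay_V X U I \<phi> Rel) (PCay_E X U I \<phi> Rel) PCay_ends"
proof (intro exI conjI)
  show "partite_presentation X U I \<phi> Rel" using pp S_nonempty[OF conn] by blast
  show "card X = 2" by (simp add: X_def)
  show "mg_iso (bi_V G) (bi_E G R L S) id (PCay_V X U I \<phi> Rel) (PCay_E X U I \<phi> Rel) PCay_ends"
    using mg_iso_sym[OF iso_rev[OF conn]] ends_E by blast
qed

end

lemma (in group) half_set:
  assumes RG: "R \<subseteq> carrier G" and Ri: "(\<lambda>x. inv x) ` R = R" and nf: "\<forall>x\<in>R. inv x \<noteq> x"
  shows "\<exists>A. A \<subseteq> R \<and> R = A \<union> (\<lambda>x. inv x) ` A \<and> A \<inter> (\<lambda>x. inv x) ` A = {}"
proof -
  define c where "c r = (SOME x. x \<in> {r, inv r})" for r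
  have c1: "c r \<in> {r, inv r}" for r unfolding c_def by (rule someI[of _ r]) simp
  have c2: "c (inv r) = c r" if "r \<in> carrier G" for r
  proof -
    have "{inv r, inv (inv r)} = {r, inv r}" using that by auto
    then show ?thesis unfolding c_def by simp
  qed
  define A where "A = {r \<in> R. c r = r}"
  have iR: "inv r \<in> R" if "r \<in> R" for r using Ri that by blast
  have "R \<subseteq> A \<union> (\<lambda>x. inv x) ` A"
  proof
    fix r assume r: "r \<in> R"
    show "r \<in> A \<union> (\<lambda>x. inv x) ` A"
    proof (cases "c r = r")
      case True then show ?thesis using r A_def by simp
    next
      case False
      then have "c r = inv r" using c1 by blast
      then have "c (inv r) = inv r" using c2 r RG by auto
      then have "inv r \<in> A" using iR r A_def by simp
      moreover have "r = inv (inv r)" using r RG by auto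
      ultimately show ?thesis by blast
    qed
  qed
  moreover have "A \<union> (\<lambda>x. inv x) ` A \<subseteq> R" using A_def iR by auto
  moreover have "A \<inter> (\<lambda>x. inv x) ` A = {}"
  proof (rule ccontr)
    assume "A \<inter> (\<lambda>x. inv x) ` A \<noteq> {}"
    then obtain x a where xa: "x \<in> A" "a \<in> A" "x = inv a" by blast
    then have "c x = x" "c a = a" "a \<in> R" using A_def by auto
    moreover have "c x = c a" using xa c2 RG A_def by auto
    ultimately show False using xa nf by auto
  qed
  ultimately show ?thesis unfolding A_def by blast
qed

lemma (in group) half_card:
  assumes RG: "R \<subseteq> carrier G" and RA: "R = A \<union> (\<lambda>x. inv x) ` A" and AD: "A \<inter> (\<lambda>x. inv x) ` A = {}"
  shows "(finite R \<longrightarrow> finite A \<and> card R = 2 * card A) \<and> (infinite R \<longrightarrow> R \<approx> A)"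
proof -
  have AG: "A \<subseteq> carrier G" using RG RA by auto
  have inj: "inj_on (\<lambda>x. inv x) A"
  proof (rule inj_onI)
    fix x y assume xy: "x \<in> A" "y \<in> A" "inv x = inv y"
    have c: "x \<in> carrier G" "y \<in> carrier G" using xy AG by auto
    have "x = inv (inv x)" using c by simp
    also have "\<dots> = inv (inv y)" using xy(3) by simp
    also have "\<dots> = y" using c by simp
    finally show "x = y" .
  qed
  show ?thesis
  proof (intro conjI impI)
    assume "finite R" then show "finite A" using RA by simp
  next
    assume f: "finite R"
    then have fA: "finite A" using RA by simp
    then have "card R = card A + card ((\<lambda>x. inv x) ` A)"
      using RA card_Un_disjoint[OF fA finite_imageI[OF fA] AD] by simp
    also have "\<dots> = 2 * card A" using card_image[OF inj] by simp
    finally show "card R = 2 * card A" .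
  next
    assume inf: "infinite R"
    then have iA: "infinite A" using RA by auto
    have "ordLeq2 (card_of (A \<union> (\<lambda>x. inv x) ` A)) (card_of A)"
      apply (rule card_of_Un_ordLeq_infinite_Field)
      subgoal using iA by (simp add: Field_card_of)
      subgoal by (rule card_of_refl[THEN ordIso_imp_ordLeq])
      subgoal by (rule card_of_image)
      subgoal by (rule card_of_Card_order)
      done
    then have "R \<lesssim> A" using RA by (simp add: lepoll_def card_of_ordLeq[symmetric])
    moreover have "A \<lesssim> R" using RA by (simp add: subset_imp_lepoll)
    ultimately show "R \<approx> A" by (rule lepoll_antisym)
  qed
qed

theorem proposition4:
  fixes G (structure) and R L S :: "'g set"
  assumes "group G"
    and "R \<subseteq> carrier G" and "L \<subseteq> carrier G" and "S \<subseteq> carrier G"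
    and "(\<lambda>x. inv x) ` R = R" and "(\<lambda>x. inv x) ` L = L"
    and "R \<approx> L"
    and "\<forall>x\<in>R \<union> L. inv x \<noteq> x"
    and "mg_connected (bi_V G) (bi_E G R L S) id"
  shows "\<exists>(X :: nat set) (U :: ('g \<times> nat) set) I \<phi> Rel.
           partite_presentation X U I \<phi> Rel \<and> card X = 2 \<and>
           mg_iso (bi_V G) (bi_E G R L S) id
                  (PCay_V X U I \<phi> Rel) (PCay_E X U I \<phi> Rel) PCay_ends"
proof -
  interpret group G by fact
  have nR: "\<forall>x\<in>R. inv x \<noteq> x" and nL: "\<forall>x\<in>L. inv x \<noteq> x" using assms(8) by auto
  obtain A where A: "R = A \<union> (\<lambda>x. inv x) ` A" "A \<inter> (\<lambda>x. inv x) ` A = {}"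
    using half_set[OF assms(2,5) nR] by blast
  obtain B where B: "L = B \<union> (\<lambda>x. inv x) ` B" "B \<inter> (\<lambda>x. inv x) ` B = {}"
    using half_set[OF assms(3,6) nL] by blast
  note hA = half_card[OF assms(2) A] and hB = half_card[OF assms(3) B]
  have AB: "A \<approx> B"
  proof (cases "finite R")
    case True
    then have fL: "finite L" using eqpoll_finite_iff[OF assms(7)] by simp
    then have "card R = card L" using True assms(7) eqpoll_iff_card by blast
    then have "card A = card B" "finite A" "finite B" using hA hB True fL by auto
    then show ?thesis using eqpoll_iff_card by blast
  next
    case False
    then have fL: "infinite L" using eqpoll_finite_iff[OF assms(7)] by simp
    have "R \<approx> A" "L \<approx> B" using hA hB False fL by auto
    then show ?thesis using assms(7) by (meson eqpoll_sym eqpoll_trans)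
  qed
  then obtain f where f: "bij_betw f A B" unfolding eqpoll_def by blast
  interpret bic G R L S A B f
    by unfold_locales (use assms(2,3,4) A B f in auto)
  show ?thesis by (rule main) (rule assms(9))
qed

end
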